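(* Let $B$ be a space and let $f:E\to X$ be a fibrewise map over $B$ between fibrant spaces over $B$. Then $\mathrm{secat}_B(f)=\mathrm{secat}(f)$.
   Context: A fibrewise space over $B$ is a space $X$ with a map $p_X:X\to B$; a fibrewise map $f:X\to Y$ satisfies $p_Yf=p_X$. A fibrant space over $B$ is a fibrewise space whose projection $p_X$ is a Hurewicz fibration. A fibrewise homotopy is a homotopy $H:X\times[0,1]\to Y$ with $p_Y(H(x,t))=p_X(x)$ for all $t$; write $\simeq_B$. $\mathrm{secat}_B(f)$: least $n$ such that $X$ is covered by $n+1$ open sets $U$ each admitting a fibrewise map $s:U\to E$ with $f\circ s\simeq_B$ the inclusion $U\hookrightarrow X$ ($\infty$ if none). $\mathrm{secat}(f)$ (ordinary sectional category of an arbitrary map): least $n$ such that $X$ is covered by $n+1$ open sets $U$ each admitting a map $s:U\to E$ with $f\circ s$ homotopic to the inclusion $U\hookrightarrow X$ ($\infty$ if none). *)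

theory Defs
  imports "HOL-Analysis.Analysis"
begin

text \<open>Homotopy lifting property of p : Y \<rightarrow> B with respect to all test spaces whose
  carrier lives in the type 'z.\<close>
definition hlp_wrt :: "'z itself \<Rightarrow> ('y \<Rightarrow> 'b) \<Rightarrow> 'y topology \<Rightarrow> 'b topology \<Rightarrow> bool" where
  "hlp_wrt _ p Y B \<longleftrightarrow>
     (\<forall>(Z::'z topology) g h.
        continuous_map Z Y g \<and>
        continuous_map (prod_topology Z (top_of_set {0..1::real})) B h \<and>
        (\<forall>z\<in>topspace Z. h (z, 0) = p (g z))
        \<longrightarrow> (\<exists>H. continuous_map (prod_topology Z (top_of_set {0..1::real})) Y H \<and>
                 (\<forall>z\<in>topspace Z. H (z, 0) = g z) \<and>
                 (\<forall>w\<in>topspace (prod_topology Z (top_of_set {0..1::real})). p (H w) = h w)))"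

definition fibrant_wrt :: "'z itself \<Rightarrow> ('y \<Rightarrow> 'b) \<Rightarrow> 'y topology \<Rightarrow> 'b topology \<Rightarrow> bool" where
  "fibrant_wrt T p Y B \<longleftrightarrow> continuous_map Y B p \<and> hlp_wrt T p Y B"

definition fibrewise_map :: "('e \<Rightarrow> 'b) \<Rightarrow> 'e topology \<Rightarrow> ('x \<Rightarrow> 'b) \<Rightarrow> 'x topology \<Rightarrow> ('e \<Rightarrow> 'x) \<Rightarrow> bool" where
  "fibrewise_map pE E pX X f \<longleftrightarrow> continuous_map E X f \<and> (\<forall>e\<in>topspace E. pX (f e) = pE e)"

text \<open>Ordinary sectional category of an arbitrary map f : E \<rightarrow> X (\<infinity> if no finite cover).\<close>
definition secat :: "'e topology \<Rightarrow> 'x topology \<Rightarrow> ('e \<Rightarrow> 'x) \<Rightarrow> enat" where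
  "secat E X f = (INF n \<in> {n::nat. \<exists>U :: nat \<Rightarrow> 'x set.
       (\<forall>i\<le>n. openin X (U i)) \<and> topspace X \<subseteq> (\<Union>i\<le>n. U i) \<and>
       (\<forall>i\<le>n. \<exists>s. continuous_map (subtopology X (U i)) E s \<and>
                  homotopic_with (\<lambda>_. True) (subtopology X (U i)) X (f \<circ> s) id)}. enat n)"

definition secat_B :: "('e \<Rightarrow> 'b) \<Rightarrow> 'e topology \<Rightarrow> ('x \<Rightarrow> 'b) \<Rightarrow> 'x topology \<Rightarrow> ('e \<Rightarrow> 'x) \<Rightarrow> enat" where
  "secat_B pE E pX X f = (INF n \<in> {n::nat. \<exists>U :: nat \<Rightarrow> 'x set.
       (\<forall>i\<le>n. openin X (U i)) \<and> topspace X \<subseteq> (\<Union>i\<le>n. U i) \<and>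
       (\<forall>i\<le>n. \<exists>s. continuous_map (subtopology X (U i)) E s \<and>
                  (\<forall>x\<in>U i \<inter> topspace X. pE (s x) = pX x) \<and>
                  homotopic_with (\<lambda>h. \<forall>x\<in>U i \<inter> topspace X. pX (h x) = pX x)
                     (subtopology X (U i)) X (f \<circ> s) id)}. enat n)"

end

theory Submission
  imports Defs
begin
lemma psi_lemma:
  fixes t :: real assumes "0 \<le> t" "t \<le> 1"
  shows "max \<bar>2 * max 0 (min 1 (3*t - 1)) - 1\<bar> (min 1 (min (3*t) (3 - 3*t))) = 1"
  using assms by (auto simp: max_def min_def abs_if)

lemma snd_real: "continuous_map (prod_topology A (top_of_set S)) euclideanreal snd"
  using continuous_map_snd[of A "top_of_set S"] continuous_map_in_subtopology by blast

lemma fst_real: "continuous_map (prod_topology (top_of_set S) A) euclideanreal fst"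
  using continuous_map_fst[of "top_of_set S" A] continuous_map_in_subtopology by blast

lemma cont_I: "continuous_map T euclideanreal g \<Longrightarrow> (\<And>x. x\<in>topspace T \<Longrightarrow> g x \<in> S) \<Longrightarrow> continuous_map T (top_of_set S) g"
  by (simp add: continuous_map_in_subtopology image_subset_iff)

lemma main_lemma:
  fixes pE :: "'e \<Rightarrow> 'b" and pX :: "'x \<Rightarrow> 'b" and f :: "'e \<Rightarrow> 'x"
  assumes hE: "hlp_wrt TYPE('x \<times> real) pE E B" and hX: "hlp_wrt TYPE('x \<times> real) pX X B"
    and cpX: "continuous_map X B pX" and fw: "fibrewise_map pE E pX X f"
    and s: "continuous_map (subtopology X U) E s"
    and hom: "homotopic_with (\<lambda>_. True) (subtopology X U) X (f \<circ> s) id"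
  shows "\<exists>s'. continuous_map (subtopology X U) E s' \<and> (\<forall>x\<in>U \<inter> topspace X. pE (s' x) = pX x) \<and>
     homotopic_with (\<lambda>h. \<forall>x\<in>U \<inter> topspace X. pX (h x) = pX x) (subtopology X U) X (f \<circ> s') id"
proof -
  define Xu where "Xu = subtopology X U"
  define I where "I = top_of_set {0..1::real}"
  define Z where "Z = prod_topology Xu I"
  have tXu: "topspace Xu = U \<inter> topspace X" unfolding Xu_def by auto
  have tI: "topspace I = {0..1}" unfolding I_def by auto
  have cf: "continuous_map E X f" and fwf: "\<And>e. e \<in> topspace E \<Longrightarrow> pX (f e) = pE e"
    using fw unfolding fibrewise_map_def by auto
  obtain H0 where H0c: "continuous_map (prod_topology I Xu) X H0"
    and H00: "\<And>x. H0 (0, x) = f (s x)" and H01: "\<And>x. H0 (1, x) = x"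
    using hom unfolding homotopic_with_def Xu_def I_def by auto
  define H where "H = (\<lambda>z. H0 (snd z, fst z))"
  have Hc: "continuous_map (prod_topology Xu I) X H"
  proof -
    have "continuous_map (prod_topology Xu I) (prod_topology I Xu) (\<lambda>z. (snd z, fst z))"
      by (intro continuous_map_pairedI continuous_map_fst continuous_map_snd)
    then show ?thesis using continuous_map_compose[OF _ H0c] unfolding H_def o_def by blast
  qed
  have H0': "\<And>x. H (x, 0) = f (s x)" and H1': "\<And>x. H (x, 1) = x"
    by (auto simp: H_def H00 H01)
  have sE: "\<And>x. x \<in> topspace Xu \<Longrightarrow> s x \<in> topspace E"
    using continuous_map_image_subset_topspace[OF s] unfolding Xu_def by blast
  obtain K1 where K1c: "continuous_map (prod_topology Z I) E K1"
    and K10: "\<And>z. z \<in> topspace Z \<Longrightarrow> K1 (z, 0) = s (fst z)"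
    and K1p: "\<And>w. w \<in> topspace (prod_topology Z I) \<Longrightarrow> pE (K1 w) = pX (H (fst (fst w), snd w))"
  proof -
    have g: "continuous_map Z E (\<lambda>z. s (fst z))"
      using continuous_map_compose[OF continuous_map_fst s[folded Xu_def]] unfolding Z_def o_def by blast
    have "continuous_map (prod_topology Z I) (prod_topology Xu I) (\<lambda>w. (fst (fst w), snd w))"
      unfolding Z_def
      by (intro continuous_map_pairedI continuous_map_snd continuous_map_compose[OF continuous_map_fst continuous_map_fst, unfolded o_def])
    then have h: "continuous_map (prod_topology Z (top_of_set {0..1::real})) B (\<lambda>w. pX (H (fst (fst w), snd w)))"
      using continuous_map_compose[OF continuous_map_compose[OF _ Hc] cpX] unfolding o_def I_def by blast
    have "\<forall>z\<in>topspace Z. (\<lambda>w. pX (H (fst (fst w), snd w))) (z, 0::real) = pE (s (fst z))"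
      using H0' fwf sE unfolding Z_def by auto
    from hE[unfolded hlp_wrt_def, rule_format, OF conjI[OF g conjI[OF h this]]]
    obtain K where "continuous_map (prod_topology Z (top_of_set {0..1})) E K"
      "\<forall>z\<in>topspace Z. K (z, 0) = s (fst z)"
      "\<forall>w\<in>topspace (prod_topology Z (top_of_set {0..1})). pE (K w) = pX (H (fst (fst w), snd w))"
      by blast
    then show ?thesis using that unfolding I_def by blast
  qed
  have tZ: "\<And>z. z \<in> topspace Z \<longleftrightarrow> fst z \<in> U \<inter> topspace X \<and> snd z \<in> {0..1}"
    unfolding Z_def by (auto simp: tXu tI mem_Times_iff)
  have K1E: "\<And>w. w \<in> topspace (prod_topology Z I) \<Longrightarrow> K1 w \<in> topspace E"
    using continuous_map_image_subset_topspace[OF K1c] by blast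
  define s' where "s' = (\<lambda>x. K1 ((x, 0::real), 1::real))"
  have s'c: "continuous_map Xu E s'"
  proof -
    have "continuous_map Xu (prod_topology Z I) (\<lambda>x. ((x, 0::real), 1::real))"
      unfolding Z_def by (intro continuous_map_pairedI) (auto simp: tI)
    then show ?thesis using continuous_map_compose[OF _ K1c] unfolding s'_def o_def by blast
  qed
  have s'p: "\<And>x. x \<in> U \<inter> topspace X \<Longrightarrow> pE (s' x) = pX x"
    unfolding s'_def using K1p H1' tZ by (auto simp: tI)
  define L where "L = (\<lambda>z. if snd z \<le> 1/2 then f (K1 ((fst z, 0::real), 1 - 2 * snd z)) else H (fst z, 2 * snd z - 1))"
  have tZI: "\<And>w. w \<in> topspace (prod_topology Z I) \<longleftrightarrow> fst w \<in> topspace Z \<and> snd w \<in> {0..1}"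
    by (simp add: tI mem_Times_iff)
  have contp: "continuous_map Z euclideanreal snd" unfolding Z_def I_def by (rule snd_real)
  have contfst: "continuous_map Z Xu fst" unfolding Z_def by (rule continuous_map_fst)
  have Lc: "continuous_map Z X L"
    unfolding L_def
  proof (rule continuous_map_cases_le[OF contp continuous_map_canonical_const])
    let ?Z1 = "subtopology Z {z \<in> topspace Z. snd z \<le> 1/2}"
    have "continuous_map ?Z1 (prod_topology Z I) (\<lambda>z. ((fst z, 0::real), 1 - 2 * snd z))"
    proof (intro continuous_map_pairedI)
      show "continuous_map ?Z1 Z (\<lambda>z. (fst z, 0::real))"
        unfolding Z_def
        by (intro continuous_map_pairedI continuous_map_from_subtopology[OF continuous_map_fst]) (simp add: tI)
      show "continuous_map ?Z1 I (\<lambda>z. 1 - 2 * snd z)"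
        unfolding I_def
        by (rule cont_I) (auto intro!: continuous_map_diff continuous_map_real_mult_left continuous_map_from_subtopology[OF contp] simp: tZ)
    qed
    then show "continuous_map ?Z1 X (\<lambda>z. f (K1 ((fst z, 0), 1 - 2 * snd z)))"
      using continuous_map_compose[OF continuous_map_compose[OF _ K1c] cf] unfolding o_def by blast
    let ?Z2 = "subtopology Z {z \<in> topspace Z. 1/2 \<le> snd z}"
    have "continuous_map ?Z2 (prod_topology Xu I) (\<lambda>z. (fst z, 2 * snd z - 1))"
    proof (intro continuous_map_pairedI)
      show "continuous_map ?Z2 Xu fst"
        by (rule continuous_map_from_subtopology[OF contfst])
      show "continuous_map ?Z2 I (\<lambda>z. 2 * snd z - 1)"
        unfolding I_def
        by (rule cont_I) (auto intro!: continuous_map_diff continuous_map_real_mult_left continuous_map_from_subtopology[OF contp] simp: tZ)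
    qed
    then show "continuous_map ?Z2 X (\<lambda>z. H (fst z, 2 * snd z - 1))"
      using continuous_map_compose[OF _ Hc] unfolding o_def by blast
    fix z assume "z \<in> topspace Z" "snd z = 1/2"
    then show "f (K1 ((fst z, 0), 1 - 2 * snd z)) = H (fst z, 2 * snd z - 1)"
    proof -
      have e1: "1 - 2 * snd z = 0" "2 * snd z - 1 = 0" using \<open>snd z = 1/2\<close> by auto
      have "(fst z, 0::real) \<in> topspace Z" using \<open>z \<in> topspace Z\<close> tZ by auto
      then show ?thesis unfolding e1 using K10[of "(fst z, 0)"] H0' by simp
    qed
  qed
  have Lp: "pX (L z) = pX (H (fst z, \<bar>2 * snd z - 1\<bar>))" if z: "z \<in> topspace Z" for z
  proof (cases "snd z \<le> 1/2")
    case True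
    let ?w = "((fst z, 0::real), 1 - 2 * snd z)"
    have w: "?w \<in> topspace (prod_topology Z I)" using z True by (auto simp: tZI tZ tI)
    have "pX (L z) = pE (K1 ?w)" using True fwf[OF K1E[OF w]] by (simp add: L_def)
    also have "\<dots> = pX (H (fst z, 1 - 2 * snd z))" using K1p[OF w] by simp
    moreover have "\<bar>2 * snd z - 1\<bar> = 1 - 2 * snd z" using True by linarith
    ultimately show ?thesis by simp
  next
    case False
    moreover have "\<bar>2 * snd z - 1\<bar> = 2 * snd z - 1" using False by linarith
    ultimately show ?thesis by (simp add: L_def)
  qed
  define Phi where "Phi = (\<lambda>w. pX (H (fst (fst w), max \<bar>2 * snd (fst w) - 1\<bar> (snd w))))"
  have sf: "continuous_map (prod_topology Z I) euclideanreal (\<lambda>w. snd (fst w))"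
    using continuous_map_compose[OF continuous_map_fst[of Z I] contp] by (simp add: o_def)
  have sr: "continuous_map (prod_topology Z I) euclideanreal snd"
    unfolding I_def by (rule snd_real)
  have Phic: "continuous_map (prod_topology Z I) B Phi"
  proof -
    have "continuous_map (prod_topology Z I) (prod_topology Xu I) (\<lambda>w. (fst (fst w), max \<bar>2 * snd (fst w) - 1\<bar> (snd w)))"
    proof (intro continuous_map_pairedI)
      show "continuous_map (prod_topology Z I) Xu (\<lambda>w. fst (fst w))"
        using continuous_map_compose[OF continuous_map_fst[of Z I] contfst] by (simp add: o_def)
      show "continuous_map (prod_topology Z I) I (\<lambda>w. max \<bar>2 * snd (fst w) - 1\<bar> (snd w))"
        unfolding I_def
        by (rule cont_I) (auto intro!: continuous_map_real_max continuous_map_real_abs continuous_map_diff continuous_map_real_mult_left sf[unfolded I_def] sr[unfolded I_def] simp: tZI tZ)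
    qed
    then show ?thesis
      using continuous_map_compose[OF continuous_map_compose[OF _ Hc] cpX] unfolding o_def Phi_def by blast
  qed
  obtain L' where L'c: "continuous_map (prod_topology Z I) X L'"
    and L'0: "\<And>z. z \<in> topspace Z \<Longrightarrow> L' (z, 0) = L z"
    and L'p: "\<And>w. w \<in> topspace (prod_topology Z I) \<Longrightarrow> pX (L' w) = Phi w"
  proof -
    have "\<forall>z\<in>topspace Z. Phi (z, 0) = pX (L z)"
      using Lp by (simp add: Phi_def)
    from hX[unfolded hlp_wrt_def, rule_format, OF conjI[OF Lc conjI[OF Phic[unfolded I_def] this]]]
    obtain K where "continuous_map (prod_topology Z (top_of_set {0..1})) X K"
      "\<forall>z\<in>topspace Z. K (z, 0) = L z"
      "\<forall>w\<in>topspace (prod_topology Z (top_of_set {0..1})). pX (K w) = Phi w"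
      by blast
    then show ?thesis using that unfolding I_def by blast
  qed
  define psi1 where "psi1 = (\<lambda>t::real. max 0 (min 1 (3*t - 1)))"
  define psi2 where "psi2 = (\<lambda>t::real. min 1 (min (3*t) (3 - 3*t)))"
  define hM where "hM = (\<lambda>w. L' ((snd w, psi1 (fst w)), psi2 (fst w)))"
  have fr: "continuous_map (prod_topology I Xu) euclideanreal fst"
    unfolding I_def by (rule fst_real)
  have hMc: "continuous_map (prod_topology I Xu) X hM"
  proof -
    have "continuous_map (prod_topology I Xu) (prod_topology Z I) (\<lambda>w. ((snd w, psi1 (fst w)), psi2 (fst w)))"
      unfolding Z_def
    proof (intro continuous_map_pairedI)
      show "continuous_map (prod_topology I Xu) Xu snd" by (rule continuous_map_snd)
      show "continuous_map (prod_topology I Xu) I (\<lambda>w. psi1 (fst w))"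
        unfolding I_def psi1_def
        by (rule cont_I) (auto intro!: continuous_map_real_max continuous_map_real_min continuous_map_diff continuous_map_real_mult_left fr[unfolded I_def])
      show "continuous_map (prod_topology I Xu) I (\<lambda>w. psi2 (fst w))"
        unfolding I_def psi2_def
        by (rule cont_I) (auto intro!: continuous_map_real_max continuous_map_real_min continuous_map_diff continuous_map_real_mult_left fr[unfolded I_def] simp: tI)
    qed
    then show ?thesis
      using continuous_map_compose[OF _ L'c] unfolding o_def hM_def by blast
  qed
  let ?P = "\<lambda>h. \<forall>x\<in>U \<inter> topspace X. pX (h x) = pX x"
  have hMP: "\<forall>t\<in>{0..1}. ?P (\<lambda>x. hM (t, x))"
  proof (intro ballI)
    fix t :: real and x assume t: "t \<in> {0..1}" and x: "x \<in> U \<inter> topspace X"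
    have p1: "psi1 t \<in> {0..1}" and p2: "psi2 t \<in> {0..1}" using t by (auto simp: psi1_def psi2_def)
    have w: "((x, psi1 t), psi2 t) \<in> topspace (prod_topology Z I)" using x p1 p2 by (simp add: tZI tZ tI)
    have "pX (hM (t, x)) = pX (H (x, max \<bar>2 * psi1 t - 1\<bar> (psi2 t)))"
      using L'p[OF w] by (simp add: hM_def Phi_def)
    also have "max \<bar>2 * psi1 t - 1\<bar> (psi2 t) = 1"
      using psi_lemma[of t] t unfolding psi1_def psi2_def by auto
    finally show "pX (hM (t, x)) = pX x" by (simp add: H1')
  qed
  have h1: "homotopic_with ?P Xu X (\<lambda>x. hM (0, x)) (\<lambda>x. hM (1, x))"
    unfolding homotopic_with_def I_def[symmetric] using hMc hMP by blast
  have hM0: "hM (0, x) = f (s' x)" if x: "x \<in> topspace Xu" for x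
  proof -
    have "(x, 0::real) \<in> topspace Z" using x by (simp add: tZ tXu)
    then show ?thesis by (simp add: hM_def psi1_def psi2_def L'0 L_def s'_def)
  qed
  have hM1: "hM (1, x) = x" if x: "x \<in> topspace Xu" for x
  proof -
    have "(x, 1::real) \<in> topspace Z" using x by (simp add: tZ tXu)
    then show ?thesis by (simp add: hM_def psi1_def psi2_def L'0 L_def H1')
  qed
  have h0: "homotopic_with ?P Xu X (f \<circ> s') (\<lambda>x. hM (0, x))"
  proof (rule homotopic_with_equal)
    show "?P (f \<circ> s')"
    proof
      fix x assume x: "x \<in> U \<inter> topspace X"
      have "s' x \<in> topspace E" using continuous_map_image_subset_topspace[OF s'c] x tXu by blast
      then show "pX ((f \<circ> s') x) = pX x" using fwf s'p[OF x] by simp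
    qed
    show "?P (\<lambda>x. hM (0, x))" using hMP by simp
    show "continuous_map Xu X (f \<circ> s')" using continuous_map_compose[OF s'c cf] .
    show "\<And>x. x \<in> topspace Xu \<Longrightarrow> (f \<circ> s') x = hM (0, x)" using hM0 by simp
  qed
  have h2: "homotopic_with ?P Xu X (\<lambda>x. hM (1, x)) id"
  proof (rule homotopic_with_equal)
    show "?P (\<lambda>x. hM (1, x))" using hMP by simp
    show "?P id" by simp
    show "continuous_map Xu X (\<lambda>x. hM (1, x))" using homotopic_with_imp_continuous_maps[OF h1] by blast
    show "\<And>x. x \<in> topspace Xu \<Longrightarrow> hM (1, x) = id x" using hM1 by simp
  qed
  show ?thesis
    using homotopic_with_trans[OF homotopic_with_trans[OF h0 h1] h2] s'c s'p unfolding Xu_def by blast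
qed


theorem theorem2p9:
  fixes B :: "'b topology" and E :: "'e topology" and X :: "'x topology"
    and pE :: "'e \<Rightarrow> 'b" and pX :: "'x \<Rightarrow> 'b" and f :: "'e \<Rightarrow> 'x"
  assumes "fibrant_wrt TYPE('x \<times> real) pE E B"
    and "fibrant_wrt TYPE('x \<times> real) pX X B"
    and "fibrewise_map pE E pX X f"
  shows "secat_B pE E pX X f = secat E X f"
proof -
  have hE: "hlp_wrt TYPE('x \<times> real) pE E B" and hX: "hlp_wrt TYPE('x \<times> real) pX X B"
    and cpX: "continuous_map X B pX"
    using assms(1,2) unfolding fibrant_wrt_def by auto
  have eq: "{n::nat. \<exists>U :: nat \<Rightarrow> 'x set.
       (\<forall>i\<le>n. openin X (U i)) \<and> topspace X \<subseteq> (\<Union>i\<le>n. U i) \<and>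
       (\<forall>i\<le>n. \<exists>s. continuous_map (subtopology X (U i)) E s \<and>
                  (\<forall>x\<in>U i \<inter> topspace X. pE (s x) = pX x) \<and>
                  homotopic_with (\<lambda>h. \<forall>x\<in>U i \<inter> topspace X. pX (h x) = pX x)
                     (subtopology X (U i)) X (f \<circ> s) id)}
      = {n::nat. \<exists>U :: nat \<Rightarrow> 'x set.
       (\<forall>i\<le>n. openin X (U i)) \<and> topspace X \<subseteq> (\<Union>i\<le>n. U i) \<and>
       (\<forall>i\<le>n. \<exists>s. continuous_map (subtopology X (U i)) E s \<and>
                  homotopic_with (\<lambda>_. True) (subtopology X (U i)) X (f \<circ> s) id)}"
    (is "?A = ?C")
  proof (intro set_eqI iffI)
    fix n assume "n \<in> ?A"
    then obtain U where U: "\<forall>i\<le>n. openin X (U i)" "topspace X \<subseteq> (\<Union>i\<le>n. U i)"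
      "\<forall>i\<le>n. \<exists>s. continuous_map (subtopology X (U i)) E s \<and>
                  (\<forall>x\<in>U i \<inter> topspace X. pE (s x) = pX x) \<and>
                  homotopic_with (\<lambda>h. \<forall>x\<in>U i \<inter> topspace X. pX (h x) = pX x)
                     (subtopology X (U i)) X (f \<circ> s) id" by blast
    have "\<forall>i\<le>n. \<exists>s. continuous_map (subtopology X (U i)) E s \<and>
                  homotopic_with (\<lambda>_. True) (subtopology X (U i)) X (f \<circ> s) id"
    proof (intro allI impI)
      fix i assume "i \<le> n"
      then obtain s where "continuous_map (subtopology X (U i)) E s"
        "homotopic_with (\<lambda>h. \<forall>x\<in>U i \<inter> topspace X. pX (h x) = pX x)
                     (subtopology X (U i)) X (f \<circ> s) id" using U(3) by blast
      then show "\<exists>s. continuous_map (subtopology X (U i)) E s \<and>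
                  homotopic_with (\<lambda>_. True) (subtopology X (U i)) X (f \<circ> s) id"
        using homotopic_with_mono[of _ "subtopology X (U i)" X "f \<circ> s" id "\<lambda>_. True"] by blast
    qed
    then show "n \<in> ?C" unfolding mem_Collect_eq using U(1,2) by (intro exI[of _ U] conjI)
  next
    fix n assume "n \<in> ?C"
    then obtain U where U: "\<forall>i\<le>n. openin X (U i)" "topspace X \<subseteq> (\<Union>i\<le>n. U i)"
      "\<forall>i\<le>n. \<exists>s. continuous_map (subtopology X (U i)) E s \<and>
                  homotopic_with (\<lambda>_. True) (subtopology X (U i)) X (f \<circ> s) id" by blast
    have "\<forall>i\<le>n. \<exists>s. continuous_map (subtopology X (U i)) E s \<and>
                  (\<forall>x\<in>U i \<inter> topspace X. pE (s x) = pX x) \<and>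
                  homotopic_with (\<lambda>h. \<forall>x\<in>U i \<inter> topspace X. pX (h x) = pX x)
                     (subtopology X (U i)) X (f \<circ> s) id"
    proof (intro allI impI)
      fix i assume "i \<le> n"
      then obtain s where "continuous_map (subtopology X (U i)) E s"
        "homotopic_with (\<lambda>_. True) (subtopology X (U i)) X (f \<circ> s) id" using U(3) by blast
      then show "\<exists>s. continuous_map (subtopology X (U i)) E s \<and>
                  (\<forall>x\<in>U i \<inter> topspace X. pE (s x) = pX x) \<and>
                  homotopic_with (\<lambda>h. \<forall>x\<in>U i \<inter> topspace X. pX (h x) = pX x)
                     (subtopology X (U i)) X (f \<circ> s) id"
        using main_lemma[OF hE hX cpX assms(3)] by (simp only:)
    qed
    then show "n \<in> ?A" unfolding mem_Collect_eq using U(1,2) by (intro exI[of _ U] conjI)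
  qed
  show ?thesis unfolding secat_B_def secat_def eq ..
qed

end
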